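(* Let $U\subset\mathbb R^m$ be open and $U_1\subset\subset U$ a bounded open set. Assume: (i) $D_df_x(u)$ exists for all $x\in X$, $u\in U$ and unit $d\in\mathbb R^m$; (ii) for every $\bar u\in\overline{U_1}$ and all sequences $\{d_n\}\subset\mathbb R^m$, $\{u_n\}\subset U_1$ with $|d_n|=1$ and $u_n\to\bar u$, there is a subsequence (not relabeled) along which $\inf_{x\in S(u_n)}D_{d_n}f_x(u_n)-\inf_{x\in S(\bar u)}D_{d_n}f_x(\bar u)\to0$; (iii) $w_1,w_2\in C(\overline{U_1})$ are, respectively, a viscosity subsolution and a viscosity supersolution in $U_1$ of $-\nabla w(u)\cdot d+\inf_{x\in S(u)}D_df_x(u)=0$ for every unit $d\in\mathbb R^m$, and $w_1\le w_2$ on $\partial U_1$. Then $w_1\le w_2$ in $U_1$.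
   Context: $\mathfrak X$ real Banach space, $X\subset\mathfrak X$ nonempty, $f:X\times U\to\mathbb R$, $\Phi:U\to2^X$, $v(u)=\inf_{x\in\Phi(u)}f(x,u)$, $S(u)=\{x\in\Phi(u):f(x,u)=v(u)\}$, $f_x(u)=f(x,u)$, $D_df_x(u)=\lim_{s\downarrow0}\frac{f(x,u+sd)-f(x,u)}{s}$; $\inf\emptyset=+\infty$. $V\subset\subset U$ means $\overline V\subset U$. For $w$ on an open set and $u_0$ in it: $\mathcal J^+w(u_0)=\{p\in\mathbb R^m:\limsup_{u\to u_0}\frac{w(u)-w(u_0)-p\cdot(u-u_0)}{|u-u_0|}\le0\}$, $\mathcal J^-w(u_0)$ analogous with $\liminf\ge0$. For fixed unit $d$, $w$ is a viscosity subsolution (supersolution) of $-\nabla w(u)\cdot d+\inf_{x\in S(u)}D_df_x(u)=0$ in an open set $V$ if $w$ is upper (lower) semicontinuous and at every $u_0\in V$, $-\eta\cdot d+\inf_{x\in S(u_0)}D_df_x(u_0)\le0$ for all $\eta\in\mathcal J^+w(u_0)$ (resp. $\ge0$ for all $\eta\in\mathcal J^-w(u_0)$). *)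

theory Defs
  imports "HOL-Analysis.Analysis" "HOL-Library.Liminf_Limsup"
begin

text \<open>Value function v(u) = inf over Phi(u) of f(x,u), with inf of the empty set = +infinity.\<close>
definition valfun :: "('x \<Rightarrow> 'u \<Rightarrow> real) \<Rightarrow> ('u \<Rightarrow> 'x set) \<Rightarrow> 'u \<Rightarrow> ereal" where
  "valfun f Phi u = (INF x\<in>Phi u. ereal (f x u))"

definition solset :: "('x \<Rightarrow> 'u \<Rightarrow> real) \<Rightarrow> ('u \<Rightarrow> 'x set) \<Rightarrow> 'u \<Rightarrow> 'x set" where
  "solset f Phi u = {x \<in> Phi u. ereal (f x u) = valfun f Phi u}"

definition dirderiv :: "('x \<Rightarrow> 'u::real_normed_vector \<Rightarrow> real) \<Rightarrow> 'x \<Rightarrow> 'u \<Rightarrow> 'u \<Rightarrow> real" where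
  "dirderiv f x u d = Lim (at_right 0) (\<lambda>s::real. (f x (u + s *\<^sub>R d) - f x u) / s)"

text \<open>inf over S(u) of D_d f_x(u), inf of empty set = +infinity.\<close>
definition hamil :: "('x \<Rightarrow> 'u::real_normed_vector \<Rightarrow> real) \<Rightarrow> ('u \<Rightarrow> 'x set) \<Rightarrow> 'u \<Rightarrow> 'u \<Rightarrow> ereal" where
  "hamil f Phi u d = (INF x\<in>solset f Phi u. ereal (dirderiv f x u d))"

definition superjet :: "('u::real_inner \<Rightarrow> real) \<Rightarrow> 'u \<Rightarrow> 'u set" where
  "superjet w u0 = {p. Limsup (at u0) (\<lambda>u. ereal ((w u - w u0 - p \<bullet> (u - u0)) / norm (u - u0))) \<le> 0}"

definition subjet :: "('u::real_inner \<Rightarrow> real) \<Rightarrow> 'u \<Rightarrow> 'u set" where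
  "subjet w u0 = {p. Liminf (at u0) (\<lambda>u. ereal ((w u - w u0 - p \<bullet> (u - u0)) / norm (u - u0))) \<ge> 0}"

definition usc_at :: "('u::topological_space \<Rightarrow> real) \<Rightarrow> 'u \<Rightarrow> bool" where
  "usc_at w u0 \<longleftrightarrow> Limsup (at u0) (\<lambda>u. ereal (w u)) \<le> ereal (w u0)"

definition lsc_at :: "('u::topological_space \<Rightarrow> real) \<Rightarrow> 'u \<Rightarrow> bool" where
  "lsc_at w u0 \<longleftrightarrow> Liminf (at u0) (\<lambda>u. ereal (w u)) \<ge> ereal (w u0)"

definition visc_sub ::
  "('x \<Rightarrow> 'u::real_inner \<Rightarrow> real) \<Rightarrow> ('u \<Rightarrow> 'x set) \<Rightarrow> 'u \<Rightarrow> 'u set \<Rightarrow> ('u \<Rightarrow> real) \<Rightarrow> bool" where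
  "visc_sub f Phi d V w \<longleftrightarrow> (\<forall>u0\<in>V. usc_at w u0) \<and>
     (\<forall>u0\<in>V. \<forall>\<eta>\<in>superjet w u0. - ereal (\<eta> \<bullet> d) + hamil f Phi u0 d \<le> 0)"

definition visc_super ::
  "('x \<Rightarrow> 'u::real_inner \<Rightarrow> real) \<Rightarrow> ('u \<Rightarrow> 'x set) \<Rightarrow> 'u \<Rightarrow> 'u set \<Rightarrow> ('u \<Rightarrow> real) \<Rightarrow> bool" where
  "visc_super f Phi d V w \<longleftrightarrow> (\<forall>u0\<in>V. lsc_at w u0) \<and>
     (\<forall>u0\<in>V. \<forall>\<eta>\<in>subjet w u0. - ereal (\<eta> \<bullet> d) + hamil f Phi u0 d \<ge> 0)"

end

theory Submission
  imports Defs
begin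


lemma ev_small:
  fixes u0 :: "'a::real_normed_vector"
  assumes "open V" "u0 \<in> V" "(y::real) > 0" "c \<ge> 0"
  shows "eventually (\<lambda>u. u \<in> V \<and> u \<noteq> u0 \<and> c * norm (u - u0) < y) (at u0)"
proof -
  obtain r where r: "r > 0" "ball u0 r \<subseteq> V" using assms openE by blast
  have "c * norm (u - u0) < y" if "dist u u0 < y / (c+1)" for u
  proof -
    have "c * norm (u - u0) \<le> (c+1) * norm (u-u0)" by (simp add: mult_right_mono)
    also have "\<dots> < (c+1) * (y/(c+1))" using that assms by (intro mult_strict_left_mono) (auto simp: dist_norm)
    finally show ?thesis using assms by simp
  qed
  moreover have "u \<in> V" if "dist u u0 < r" for u using r that by (auto simp: dist_commute)
  ultimately show ?thesis unfolding eventually_at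
    by (intro exI[of _ "min r (y/(c+1))"]) (use r assms in auto)
qed

lemma superjetI:
  fixes w :: "'a::real_inner \<Rightarrow> real"
  assumes "open V" "u0 \<in> V" "c \<ge> 0"
    "\<And>u. u \<in> V \<Longrightarrow> w u - w u0 - p \<bullet> (u - u0) \<le> c * (norm (u - u0))^2"
  shows "Limsup (at u0) (\<lambda>u. ereal ((w u - w u0 - p \<bullet> (u - u0)) / norm (u - u0))) \<le> 0"
  unfolding Limsup_le_iff
proof (intro allI impI)
  fix y :: ereal assume y: "0 < y"
  show "\<forall>\<^sub>F x in at u0. ereal ((w x - w u0 - p \<bullet> (x - u0)) / norm (x - u0)) < y"
  proof (cases y)
    case (real r)
    with y have r: "r > 0" by simp
    show ?thesis
    proof (rule eventually_mono[OF ev_small[OF assms(1,2) r assms(3)]])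
      fix u assume u: "u \<in> V \<and> u \<noteq> u0 \<and> c * norm (u - u0) < r"
      hence np: "norm (u - u0) > 0" by simp
      have "(w u - w u0 - p \<bullet> (u - u0)) / norm (u - u0) \<le> c * (norm (u - u0))^2 / norm (u - u0)"
        using assms(4) u np by (simp add: divide_right_mono)
      also have "\<dots> = c * norm (u - u0)" using np by (simp add: power2_eq_square)
      finally show "ereal ((w u - w u0 - p \<bullet> (u - u0)) / norm (u - u0)) < y" using u real by simp
    qed
  next
    case PInf then show ?thesis by simp
  next
    case MInf then show ?thesis using y by simp
  qed
qed

lemma subjetI:
  fixes w :: "'a::real_inner \<Rightarrow> real"
  assumes "open V" "u0 \<in> V" "c \<ge> 0"
    "\<And>u. u \<in> V \<Longrightarrow> w u - w u0 - p \<bullet> (u - u0) \<ge> - c * (norm (u - u0))^2"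
  shows "Liminf (at u0) (\<lambda>u. ereal ((w u - w u0 - p \<bullet> (u - u0)) / norm (u - u0))) \<ge> 0"
  unfolding le_Liminf_iff
proof (intro allI impI)
  fix y :: ereal assume y: "y < 0"
  show "\<forall>\<^sub>F x in at u0. y < ereal ((w x - w u0 - p \<bullet> (x - u0)) / norm (x - u0))"
  proof (cases y)
    case (real r)
    with y have r: "-r > 0" by simp
    show ?thesis
    proof (rule eventually_mono[OF ev_small[OF assms(1,2) r assms(3)]])
      fix u assume u: "u \<in> V \<and> u \<noteq> u0 \<and> c * norm (u - u0) < -r"
      hence np: "norm (u - u0) > 0" by simp
      have "- c * norm (u - u0) = - c * (norm (u - u0))^2 / norm (u - u0)" using np by (simp add: power2_eq_square)
      also have "\<dots> \<le> (w u - w u0 - p \<bullet> (u - u0)) / norm (u - u0)"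
        using assms(4)[of u] u np by (metis divide_right_mono minus_divide_left norm_ge_zero)
      finally show "y < ereal ((w u - w u0 - p \<bullet> (u - u0)) / norm (u - u0))" using u real by simp
    qed
  next
    case MInf then show ?thesis by simp
  next
    case PInf then show ?thesis using y by simp
  qed
qed

lemma sq_id: fixes a b c :: "'a::real_inner"
  shows "norm(a - b)^2 = norm(c - b)^2 + norm(a-c)^2 + 2*((a - c) \<bullet> (c - b))"
  by (simp add: power2_norm_eq_inner inner_diff_left inner_diff_right inner_commute algebra_simps)

lemma sup_ineq: fixes u un v e :: "'a::real_inner"
  assumes "w1 u - \<delta>*(e \<bullet> u) - w2 v - cn*norm(u - v)^2 \<le> w1 un - \<delta>*(e \<bullet> un) - w2 v - cn*norm(un - v)^2"
  shows "w1 u - w1 un - (\<delta> *\<^sub>R e + (2*cn) *\<^sub>R (un - v)) \<bullet> (u - un) \<le> cn * norm(u - un)^2"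
proof -
  have "norm(u - v)^2 = norm(un - v)^2 + norm(u-un)^2 + 2*((u - un) \<bullet> (un - v))" by (rule sq_id)
  hence "cn*norm(u - v)^2 = cn*norm(un - v)^2 + cn*norm(u-un)^2 + 2*cn*((u - un) \<bullet> (un - v))" by (simp only: distrib_left mult.assoc mult.left_commute)
  moreover have "(\<delta> *\<^sub>R e + (2*cn) *\<^sub>R (un - v)) \<bullet> (u - un) = \<delta>*(e \<bullet> u) - \<delta>*(e \<bullet> un) + 2*cn*((u - un) \<bullet> (un - v))"
    by (simp add: inner_add_left inner_diff_right inner_commute algebra_simps)
  ultimately show ?thesis using assms by linarith
qed

lemma sub_ineq: fixes u v vn :: "'a::real_inner"
  assumes "w1 u - w2 v - cn*norm(u - v)^2 \<le> w1 u - w2 vn - cn*norm(u - vn)^2"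
  shows "w2 v - w2 vn - ((2*cn) *\<^sub>R (u - vn)) \<bullet> (v - vn) \<ge> - cn * norm(v - vn)^2"
proof -
  have "norm(u - v)^2 = norm(vn - v)^2 + norm(u - vn)^2 + 2*((u - vn) \<bullet> (vn - v))" by (rule sq_id)
  hence "cn*norm(u - v)^2 = cn*norm(u - vn)^2 + cn*norm(vn-v)^2 + 2*cn*((u - vn) \<bullet> (vn - v))" by (simp only: distrib_left mult.assoc mult.left_commute add.commute)
  moreover have "cn*norm(vn - v)^2 = cn*norm(v - vn)^2" by (simp add: norm_minus_commute)
  moreover have "((2*cn) *\<^sub>R (u - vn)) \<bullet> (v - vn) = - 2*cn*((u - vn) \<bullet> (vn - v))"
    by (simp add: inner_diff_right algebra_simps)
  ultimately show ?thesis using assms by linarith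
qed

lemma ereal_sub_aux: "- ereal x + (H::ereal) \<le> 0 \<Longrightarrow> H \<le> ereal (x)"
  by (cases H) auto
lemma ereal_super_aux: "- ereal x + (H::ereal) \<ge> 0 \<Longrightarrow> H \<ge> ereal (x)"
  by (cases H) auto
lemma ereal_final_aux:
  assumes "(Hu::ereal) \<le> ereal (-\<delta> - t)" "Hv \<ge> ereal (-t)"
    "Hu - ereal c > ereal (-\<delta>/2)" "Hv - ereal c < ereal (\<delta>/2)" "\<delta> > 0"
  shows False
  using assms by (cases Hu; cases Hv) auto
lemma ereal_self_minus: "(H::ereal) - H = 0 \<Longrightarrow> \<exists>c. H = ereal c"
  by (cases H) auto


theorem mainTheorem7:
  fixes f :: "'x::banach \<Rightarrow> real^'m \<Rightarrow> real"
    and Phi :: "real^'m \<Rightarrow> 'x set"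
    and X :: "'x set"
    and U U1 :: "(real^'m) set"
    and w1 w2 :: "real^'m \<Rightarrow> real"
  assumes X_ne: "X \<noteq> {}"
    and Phi_X: "\<forall>u\<in>U. Phi u \<subseteq> X"
    and U_open: "open U"
    and U1_open: "open U1" and U1_bdd: "bounded U1" and U1_cpt_in: "closure U1 \<subseteq> U"
    and dd_exists: "\<forall>x\<in>X. \<forall>u\<in>U. \<forall>d. norm d = 1 \<longrightarrow>
        (\<exists>L. ((\<lambda>s::real. (f x (u + s *\<^sub>R d) - f x u) / s) \<longlongrightarrow> L) (at_right 0))"
    and cont_cond: "\<forall>ub\<in>closure U1. \<forall>(dn::nat \<Rightarrow> real^'m) un.
        (\<forall>n. norm (dn n) = 1) \<and> (\<forall>n. un n \<in> U1) \<and> un \<longlonglongrightarrow> ub \<longrightarrow>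
        (\<exists>r. strict_mono r \<and>
          ((\<lambda>n. hamil f Phi (un (r n)) (dn (r n)) - hamil f Phi ub (dn (r n))) \<longlongrightarrow> 0) sequentially)"
    and w1_cont: "continuous_on (closure U1) w1"
    and w2_cont: "continuous_on (closure U1) w2"
    and w1_sub: "\<forall>d. norm d = 1 \<longrightarrow> visc_sub f Phi d U1 w1"
    and w2_super: "\<forall>d. norm d = 1 \<longrightarrow> visc_super f Phi d U1 w2"
    and bdry: "\<forall>u\<in>frontier U1. w1 u \<le> w2 u"
  shows "\<forall>u\<in>U1. w1 u \<le> w2 u"
  
proof (rule ccontr)
  assume "\<not> (\<forall>u\<in>U1. w1 u \<le> w2 u)"
  then obtain u0 where u0: "u0 \<in> U1" "w1 u0 > w2 u0" by force
  define M where "M = w1 u0 - w2 u0"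
  have M: "M > 0" using u0 M_def by simp
  define K where "K = closure U1"
  have Kc: "compact K" unfolding K_def using U1_bdd by (simp add: compact_closure)
  have U1K: "U1 \<subseteq> K" unfolding K_def by (rule closure_subset)
  obtain e :: "real^'m" where e: "norm e = 1" using vector_choose_size[of 1] by auto
  obtain B where B: "B > 0" "\<forall>x\<in>K. norm x \<le> B"
    using Kc compact_imp_bounded bounded_pos by metis
  obtain B1 where B1: "\<forall>x\<in>K. \<bar>w1 x\<bar> \<le> B1"
  proof -
    have "bounded (w1 ` K)" using Kc w1_cont K_def compact_continuous_image compact_imp_bounded by metis
    then show ?thesis using that bounded_iff by (metis image_eqI real_norm_def)
  qed
  obtain B2 where B2: "\<forall>x\<in>K. \<bar>w2 x\<bar> \<le> B2"
  proof -
    have "bounded (w2 ` K)" using Kc w2_cont K_def compact_continuous_image compact_imp_bounded by metis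
    then show ?thesis using that bounded_iff by (metis image_eqI real_norm_def)
  qed
  define \<delta> where "\<delta> = M / (4*B)"
  have \<delta>: "\<delta> > 0" using M B by (simp add: \<delta>_def)
  have \<delta>B: "\<delta> * (2*B) < M" using M B by (simp add: \<delta>_def)
  have eb: "\<bar>e \<bullet> x\<bar> \<le> norm x" for x using Cauchy_Schwarz_ineq2[of e x] e by simp
  define g where "g z = w1 (fst z) - \<delta> * (e \<bullet> fst z) - w2 (snd z)" for z :: "(real^'m) \<times> (real^'m)"
  define \<Phi> where "\<Phi> n z = g z - ((real n + 1)/2) * norm (fst z - snd z)^2" for n and z :: "(real^'m) \<times> (real^'m)"
  define A where "A = w1 u0 - \<delta> * (e \<bullet> u0) - w2 u0"
  have KK: "compact (K \<times> K)" using Kc by (simp add: compact_Times)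
  have gcont: "continuous_on (K \<times> K) g"
  proof -
    have 1: "continuous_on (K \<times> K) (\<lambda>z. w1 (fst z))"
      by (rule continuous_on_compose2[OF w1_cont[folded K_def] continuous_on_fst]) auto
    have 2: "continuous_on (K \<times> K) (\<lambda>z. w2 (snd z))"
      by (rule continuous_on_compose2[OF w2_cont[folded K_def] continuous_on_snd]) auto
    show ?thesis unfolding g_def by (intro continuous_intros 1 2)
  qed
  have \<Phi>cont: "continuous_on (K \<times> K) (\<Phi> n)" for n
    unfolding \<Phi>_def by (intro continuous_intros gcont)
  have "\<forall>n. \<exists>z\<in>K \<times> K. \<forall>y\<in>K \<times> K. \<Phi> n y \<le> \<Phi> n z"
    using continuous_attains_sup[OF KK _ \<Phi>cont] u0 U1K by blast
  then obtain z where z: "\<And>n. z n \<in> K \<times> K" "\<And>n y. y \<in> K \<times> K \<Longrightarrow> \<Phi> n y \<le> \<Phi> n (z n)"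
    by metis
  define u where "u n = fst (z n)" for n
  define v where "v n = snd (z n)" for n
  have uK: "u n \<in> K" and vK: "v n \<in> K" for n using z(1)[of n] by (auto simp: u_def v_def mem_Times_iff)
  have zuv: "z n = (u n, v n)" for n by (simp add: u_def v_def)
  have \<Phi>A: "\<Phi> n (z n) \<ge> A" for n
    using z(2)[of "(u0,u0)" n] u0 U1K by (auto simp: \<Phi>_def g_def A_def)
  have gA: "g (z n) \<ge> A" for n
  proof -
    have "((real n + 1)/2) * norm (fst (z n) - snd (z n))^2 \<ge> 0" by simp
    then show ?thesis using \<Phi>A[of n] unfolding \<Phi>_def by linarith
  qed
  define C where "C = B1 + \<delta> * B + B2 + \<bar>A\<bar>"
  have pen: "norm (u n - v n)^2 \<le> 2 * C / (real n + 1)" for n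
  proof -
    have "g (z n) \<le> B1 + \<delta> * B + B2"
    proof -
      have "\<bar>\<delta> * (e \<bullet> u n)\<bar> \<le> \<delta> * B"
        using eb[of "u n"] B uK[of n] \<delta> by (simp add: abs_mult mult_left_mono order_trans)
      then show ?thesis using B1 B2 uK[of n] vK[of n] by (simp add: g_def u_def v_def; smt (verit))
    qed
    hence "((real n + 1)/2) * norm (u n - v n)^2 \<le> C"
      using \<Phi>A[of n] by (simp add: \<Phi>_def C_def u_def v_def)
    thus ?thesis by (simp add: field_simps)
  qed
  obtain l r where l: "l \<in> K \<times> K" and r: "strict_mono r" "(z \<circ> r) \<longlonglongrightarrow> l"
    using KK z(1) unfolding compact_def by metis
  define ub where "ub = fst l"
  define vb where "vb = snd l"
  have ur: "(\<lambda>n. u (r n)) \<longlonglongrightarrow> ub" using tendsto_fst[OF r(2)] by (simp add: u_def ub_def o_def)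
  have vr: "(\<lambda>n. v (r n)) \<longlonglongrightarrow> vb" using tendsto_snd[OF r(2)] by (simp add: v_def vb_def o_def)
  have ubvb: "ub = vb"
  proof -
    have t1: "(\<lambda>n. norm (u (r n) - v (r n))^2) \<longlonglongrightarrow> norm (ub - vb)^2"
      by (intro tendsto_intros ur vr)
    have "(\<lambda>n. 2*C / real (Suc n)) \<longlonglongrightarrow> 0"
      using LIMSEQ_Suc[OF lim_const_over_n[of "2*C"]] by simp
    hence lim0: "(\<lambda>n. 2 * C / (real n + 1)) \<longlonglongrightarrow> 0" by (simp add: add.commute)
    have "(\<lambda>n. norm (u n - v n)^2) \<longlonglongrightarrow> 0"
    proof (rule tendsto_sandwich[OF _ _ tendsto_const lim0])
      show "\<forall>\<^sub>F n in sequentially. (0::real) \<le> norm (u n - v n)^2" by simp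
      show "\<forall>\<^sub>F n in sequentially. norm (u n - v n)^2 \<le> 2 * C / (real n + 1)" using pen by simp
    qed
    hence "(\<lambda>n. norm (u (r n) - v (r n))^2) \<longlonglongrightarrow> 0"
      using LIMSEQ_subseq_LIMSEQ[OF _ r(1)] by (simp add: o_def)
    with t1 have "norm (ub - vb)^2 = 0" using LIMSEQ_unique by blast
    thus ?thesis by simp
  qed
  have glim: "g l \<ge> A"
  proof -
    have "(\<lambda>n. g ((z \<circ> r) n)) \<longlonglongrightarrow> g l"
      by (rule continuous_on_tendsto_compose[OF gcont r(2) l]) (use z(1) in auto)
    thus ?thesis using gA by (intro tendsto_lowerbound) (auto simp: o_def)
  qed
  have gl: "w1 ub - \<delta> * (e \<bullet> ub) - w2 ub \<ge> A"
    using glim ubvb by (simp add: g_def ub_def vb_def)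
  have ubK: "ub \<in> K" using l by (auto simp: ub_def mem_Times_iff)
  have ubU1: "ub \<in> U1"
  proof (rule ccontr)
    assume "ub \<notin> U1"
    hence "ub \<in> frontier U1" using ubK U1_open by (simp add: K_def frontier_def interior_open)
    hence "w1 ub \<le> w2 ub" using bdry by blast
    hence "M \<le> \<delta> * (e \<bullet> (u0 - ub))" using gl by (simp add: A_def M_def inner_diff_right algebra_simps)
    also have "\<dots> \<le> \<delta> * (2*B)"
    proof -
      have "e \<bullet> (u0 - ub) \<le> norm (u0 - ub)" using eb[of "u0 - ub"] by simp
      also have "\<dots> \<le> norm u0 + norm ub" by (rule norm_triangle_ineq4)
      also have "\<dots> \<le> 2 * B" using B(2) ubK u0(1) U1K by (smt (verit) subsetD)
      finally show ?thesis using \<delta> by (simp add: mult_left_mono)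
    qed
    finally show False using \<delta>B by simp
  qed
  have "eventually (\<lambda>n. u (r n) \<in> U1 \<and> v (r n) \<in> U1) sequentially"
    using topological_tendstoD[OF ur U1_open ubU1] topological_tendstoD[OF vr[folded ubvb] U1_open ubU1]
    by (rule eventually_conj)
  then obtain N where N: "\<forall>n\<ge>N. u (r n) \<in> U1 \<and> v (r n) \<in> U1" by (auto simp: eventually_sequentially)
  define s1 where "s1 n = r (n + N)" for n
  have s1U: "u (s1 n) \<in> U1" "v (s1 n) \<in> U1" for n using N by (auto simp: s1_def)
  have s1mono: "strict_mono s1" using r(1) by (simp add: strict_mono_def s1_def)
  have us1: "(\<lambda>n. u (s1 n)) \<longlonglongrightarrow> ub" using LIMSEQ_ignore_initial_segment[OF ur, of N] by (simp add: s1_def)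
  have vs1: "(\<lambda>n. v (s1 n)) \<longlonglongrightarrow> ub" using LIMSEQ_ignore_initial_segment[OF vr[folded ubvb], of N] by (simp add: s1_def)
  define H where "H y = hamil f Phi y (-e)" for y
  have ne: "norm (-e) = 1" using e by simp
  have ee: "e \<bullet> e = 1" using e by (simp add: power2_norm_eq_inner[symmetric])
  define t where "t n = ((2*((real n + 1)/2)) *\<^sub>R (u n - v n)) \<bullet> e" for n
  have key: "H (u n) \<le> ereal (-\<delta> - t n) \<and> H (v n) \<ge> ereal (-t n)"
    if un: "u n \<in> U1" and vn: "v n \<in> U1" for n
  proof -
    define cn where "cn = (real n + 1)/2"
    have cn: "cn \<ge> 0" by (simp add: cn_def)
    define q where "q = (2*cn) *\<^sub>R (u n - v n)"
    define p where "p = \<delta> *\<^sub>R e + q"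
    have "p \<in> superjet w1 (u n)"
      unfolding superjet_def
    proof (intro CollectI superjetI[OF U1_open un cn])
      fix y assume y: "y \<in> U1"
      have "\<Phi> n (y, v n) \<le> \<Phi> n (z n)" using z(2) y vK U1K by (auto simp: mem_Times_iff)
      hence "w1 y - \<delta>*(e \<bullet> y) - w2 (v n) - cn*norm(y - v n)^2 \<le> w1 (u n) - \<delta>*(e \<bullet> u n) - w2 (v n) - cn*norm(u n - v n)^2"
        by (simp add: \<Phi>_def g_def zuv cn_def)
      hence "w1 y - w1 (u n) - (\<delta> *\<^sub>R e + (2*cn) *\<^sub>R (u n - v n)) \<bullet> (y - u n) \<le> cn * norm(y - u n)^2"
        by (rule sup_ineq)
      then show "w1 y - w1 (u n) - p \<bullet> (y - u n) \<le> cn * (norm (y - u n))\<^sup>2" by (simp only: p_def q_def)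
    qed
    hence 1: "H (u n) \<le> ereal (p \<bullet> (-e))"
      using w1_sub[rule_format, OF ne] un unfolding visc_sub_def H_def
      by (intro ereal_sub_aux) blast
    have "q \<in> subjet w2 (v n)"
      unfolding subjet_def
    proof (intro CollectI subjetI[OF U1_open vn cn])
      fix y assume y: "y \<in> U1"
      have "\<Phi> n (u n, y) \<le> \<Phi> n (z n)" using z(2) y uK U1K by (auto simp: mem_Times_iff)
      hence "w1 (u n) - \<delta>*(e \<bullet> u n) - w2 y - cn*norm(u n - y)^2 \<le> w1 (u n) - \<delta>*(e \<bullet> u n) - w2 (v n) - cn*norm(u n - v n)^2"
        by (simp add: \<Phi>_def g_def zuv cn_def)
      hence "w1 (u n) - w2 y - cn*norm(u n - y)^2 \<le> w1 (u n) - w2 (v n) - cn*norm(u n - v n)^2"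
        by linarith
      hence "w2 y - w2 (v n) - ((2*cn) *\<^sub>R (u n - v n)) \<bullet> (y - v n) \<ge> - cn * norm(y - v n)^2"
        by (rule sub_ineq)
      then show "w2 y - w2 (v n) - q \<bullet> (y - v n) \<ge> - cn * (norm (y - v n))\<^sup>2" by (simp only: q_def)
    qed
    hence 2: "H (v n) \<ge> ereal (q \<bullet> (-e))"
      using w2_super[rule_format, OF ne] vn unfolding visc_super_def H_def
      by (intro ereal_super_aux) blast
    have "p \<bullet> (-e) = -\<delta> - t n" using ee by (simp add: p_def q_def t_def cn_def inner_add_left)
    moreover have "q \<bullet> (-e) = - t n" by (simp add: q_def t_def cn_def)
    ultimately show ?thesis using 1 2 by simp
  qed
  have ubcl: "ub \<in> closure U1" using ubK K_def by simp
  obtain c where c: "H ub = ereal c"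
  proof -
    obtain r0 :: "nat \<Rightarrow> nat" where "(\<lambda>n. H ub - H ub) \<longlonglongrightarrow> 0"
      using cont_cond[rule_format, OF ubcl, of "\<lambda>_. -e" "\<lambda>_. ub"] ne ubU1 by (auto simp: H_def)
    hence "H ub - H ub = 0" by (simp add: LIMSEQ_const_iff)
    thus ?thesis using that ereal_self_minus by blast
  qed
  obtain r2 where r2: "strict_mono r2" "(\<lambda>n. H (u (s1 (r2 n))) - H ub) \<longlonglongrightarrow> 0"
    using cont_cond[rule_format, OF ubcl, of "\<lambda>_. -e" "\<lambda>n. u (s1 n)"] ne s1U us1 by (auto simp: H_def)
  have vs2: "(\<lambda>n. v (s1 (r2 n))) \<longlonglongrightarrow> ub" using LIMSEQ_subseq_LIMSEQ[OF vs1 r2(1)] by (simp add: o_def)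
  obtain r3 where r3: "strict_mono r3" "(\<lambda>n. H (v (s1 (r2 (r3 n)))) - H ub) \<longlonglongrightarrow> 0"
    using cont_cond[rule_format, OF ubcl, of "\<lambda>_. -e" "\<lambda>n. v (s1 (r2 n))"] ne s1U vs2 by (auto simp: H_def)
  have a: "(\<lambda>n. H (u (s1 (r2 (r3 n)))) - H ub) \<longlonglongrightarrow> 0"
    using LIMSEQ_subseq_LIMSEQ[OF r2(2) r3(1)] by (simp add: o_def)
  have "eventually (\<lambda>n. H (u (s1 (r2 (r3 n)))) - H ub > ereal (-\<delta>/2)) sequentially"
    using order_tendstoD(1)[OF a] \<delta> by simp
  moreover have "eventually (\<lambda>n. H (v (s1 (r2 (r3 n)))) - H ub < ereal (\<delta>/2)) sequentially"
    using order_tendstoD(2)[OF r3(2)] \<delta> by simp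
  ultimately have "eventually (\<lambda>n. H (u (s1 (r2 (r3 n)))) - H ub > ereal (-\<delta>/2) \<and>
      H (v (s1 (r2 (r3 n)))) - H ub < ereal (\<delta>/2)) sequentially" by (rule eventually_conj)
  then obtain m where m: "H (u (s1 (r2 (r3 m)))) - ereal c > ereal (-\<delta>/2)"
      "H (v (s1 (r2 (r3 m)))) - ereal c < ereal (\<delta>/2)"
    using c by (auto simp: eventually_sequentially)
  define k where "k = s1 (r2 (r3 m))"
  have "H (u k) \<le> ereal (-\<delta> - t k) \<and> H (v k) \<ge> ereal (-t k)"
    using key s1U unfolding k_def by blast
  thus False using ereal_final_aux[OF _ _ m[folded k_def] \<delta>] by blast
qed

end
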